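(* Let $m>n$ be positive integers and let $G[V_1,V_2]$ be a balanced bipartite graph on $2(m+n-1)$ vertices (so $|V_1|=|V_2|=m+n-1$) with minimum degree $\delta(G)>\frac{3}{4}(m+n-1)$. Then for every red-blue coloring of the edges of $G$, either there is a connected component $C$ of the red subgraph with $|V(C)\cap V_1|\ge m$ and $|V(C)\cap V_2|\ge m$, or there is a connected component $C$ of the blue subgraph with $|V(C)\cap V_1|\ge n$ and $|V(C)\cap V_2|\ge n$.
   Context: For a red-blue edge coloring of $G$, the red subgraph (resp. blue subgraph) is the spanning subgraph of $G$ consisting of all red (resp. blue) edges; a red (blue) component is a connected component of this spanning subgraph. *)

theory Defs
  imports Main
begin

definition bipartite_graph :: "'a set \<Rightarrow> 'a set \<Rightarrow> ('a \<Rightarrow> 'a \<Rightarrow> bool) \<Rightarrow> bool" where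
  "bipartite_graph V1 V2 E \<longleftrightarrow> finite V1 \<and> finite V2 \<and> V1 \<inter> V2 = {} \<and>
     (\<forall>u v. E u v \<longrightarrow> E v u) \<and>
     (\<forall>u v. E u v \<longrightarrow> (u \<in> V1 \<and> v \<in> V2) \<or> (u \<in> V2 \<and> v \<in> V1))"

definition degree :: "('a \<Rightarrow> 'a \<Rightarrow> bool) \<Rightarrow> 'a \<Rightarrow> nat" where
  "degree E v = card {u. E v u}"

definition component :: "'a set \<Rightarrow> ('a \<Rightarrow> 'a \<Rightarrow> bool) \<Rightarrow> 'a \<Rightarrow> 'a set" where
  "component V F v = {u \<in> V. (F\<^sup>*\<^sup>*) v u}"

definition components :: "'a set \<Rightarrow> ('a \<Rightarrow> 'a \<Rightarrow> bool) \<Rightarrow> 'a set set" where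
  "components V F = component V F ` V"

end

theory Submission
  imports Defs
begin

definition bigP :: "'a set \<Rightarrow> 'a set \<Rightarrow> ('a \<Rightarrow> 'a \<Rightarrow> bool) \<Rightarrow> (nat \<Rightarrow> bool) \<Rightarrow> bool" where
  "bigP X Y G P \<longleftrightarrow> (\<exists>C \<in> components (X \<union> Y) G. P (card (C \<inter> X)) \<and> P (card (C \<inter> Y)))"

lemma bigP_swap: "bigP Y X G P = bigP X Y G P"
  unfolding bigP_def by (auto simp: Un_commute)

lemma bigP_mono: "bigP X Y G P \<Longrightarrow> (\<And>c. P c \<Longrightarrow> Q c) \<Longrightarrow> bigP X Y G Q"
  unfolding bigP_def by blast

lemma comp_int: "component (X \<union> Y) G v \<inter> X = {u. G\<^sup>*\<^sup>* v u} \<inter> X"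
  "component (X \<union> Y) G v \<inter> Y = {u. G\<^sup>*\<^sup>* v u} \<inter> Y"
  unfolding component_def by auto

lemma big_intro:
  assumes "finite X" "finite Y" "v \<in> X \<union> Y" "A \<subseteq> X" "B \<subseteq> Y"
    "\<forall>a\<in>A. G\<^sup>*\<^sup>* v a" "\<forall>b\<in>B. G\<^sup>*\<^sup>* v b"
    "\<And>i j. i \<le> j \<Longrightarrow> P i \<Longrightarrow> P j" "P (card A)" "P (card B)"
  shows "bigP X Y G P"
proof -
  let ?C = "component (X \<union> Y) G v"
  have "?C \<in> components (X \<union> Y) G" using assms(3) by (simp add: components_def)
  moreover have "card A \<le> card (?C \<inter> X)"
    by (rule card_mono) (use assms in \<open>auto simp: component_def\<close>)
  moreover have "card B \<le> card (?C \<inter> Y)"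
    by (rule card_mono) (use assms in \<open>auto simp: component_def\<close>)
  ultimately show ?thesis unfolding bigP_def using assms(8-10) by blast
qed

locale bg =
  fixes X Y :: "'a set" and E :: "'a \<Rightarrow> 'a \<Rightarrow> bool" and N :: nat
  assumes finX: "finite X" and finY: "finite Y" and cX: "card X = N" and cY: "card Y = N"
    and disj: "X \<inter> Y = {}" and Esym: "E u v \<Longrightarrow> E v u"
    and Eside: "E u v \<Longrightarrow> (u \<in> X \<and> v \<in> Y) \<or> (u \<in> Y \<and> v \<in> X)"
    and degX: "v \<in> X \<Longrightarrow> 3*N < 4*card {u. E v u}"
    and degY: "v \<in> Y \<Longrightarrow> 3*N < 4*card {u. E v u}"
    and Npos: "0 < N"

lemma bg_swap:
  assumes "bg X Y E N" shows "bg Y X E N"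
proof -
  interpret bg X Y E N by fact
  show ?thesis
  proof unfold_locales
    fix u v assume "E u v" then show "(u \<in> Y \<and> v \<in> X) \<or> (u \<in> X \<and> v \<in> Y)" using Eside by blast
  qed (use finX finY cX cY disj Esym degX degY Npos in \<open>auto simp: Int_commute\<close>)
qed

context bg
begin

lemma nbrY: "v \<in> X \<Longrightarrow> {u. E v u} \<subseteq> Y"
  using Eside disj by blast

lemma miss:
  assumes "v \<in> X" "T \<subseteq> Y"
  shows "4*card T < 4*card (T \<inter> {u. E v u}) + N"
proof -
  let ?M = "{u. E v u}"
  have fM: "finite ?M" using nbrY assms finY finite_subset by blast
  have fT: "finite T" using assms finY finite_subset by blast
  have "card T + card ?M = card (T \<union> ?M) + card (T \<inter> ?M)" by (rule card_Un_Int[OF fT fM])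
  moreover have "card (T \<union> ?M) \<le> N" using card_mono[OF finY, of "T \<union> ?M"] assms nbrY cY by blast
  ultimately show ?thesis using degX[OF assms(1)] by linarith
qed

lemma common:
  assumes "s \<in> X" "s' \<in> X" "T \<subseteq> Y" "N \<le> 2*card T"
  shows "\<exists>t\<in>T. E s t \<and> E s' t"
proof (rule ccontr)
  assume "\<not> ?thesis"
  then have d: "(T \<inter> {u. E s u}) \<inter> (T \<inter> {u. E s' u}) = {}" by blast
  have fT: "finite T" using assms finY finite_subset by blast
  have "card (T \<inter> {u. E s u}) + card (T \<inter> {u. E s' u}) = card ((T \<inter> {u. E s u}) \<union> (T \<inter> {u. E s' u}))"
    by (rule card_Un_disjoint[symmetric]) (use fT d in auto)
  also have "\<dots> \<le> card T" by (rule card_mono[OF fT]) auto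
  finally show False using miss[OF assms(1,3)] miss[OF assms(2,3)] assms(4) by linarith
qed

end

lemma (in bg) hasnbr:
  assumes "t \<in> Y" "S \<subseteq> X" "N \<le> 4*card S"
  shows "\<exists>s\<in>S. E t s"
proof -
  have "4*card S < 4*card (S \<inter> {u. E t u}) + N"
    using bg.miss[OF bg_swap[OF bg_axioms]] assms by blast
  then have "S \<inter> {u. E t u} \<noteq> {}" using assms(3) by auto
  then show ?thesis by blast
qed

context bg
begin

lemma rect_S:
  assumes sym: "\<forall>u v. col u v \<longrightarrow> col v u" and "S \<subseteq> X" "T \<subseteq> Y"
    and rect: "\<forall>s\<in>S. \<forall>t\<in>T. E s t \<longrightarrow> col s t" and "N \<le> 2*card T"
    and "s0 \<in> S" "s \<in> S"
  shows "(\<lambda>u v. E u v \<and> col u v)\<^sup>*\<^sup>* s0 s"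
proof -
  obtain t where t: "t \<in> T" "E s0 t" "E s t"
    using common[of s0 s T] assms(2,3,5,6,7) by blast
  have "E t s" using Esym t(3) .
  have "col s0 t" using rect assms(6) t(1,2) by blast
  have "col s t" using rect assms(7) t(1,3) by blast
  then have "col t s" using sym by blast
  have a: "(\<lambda>u v. E u v \<and> col u v) s0 t" using t(2) \<open>col s0 t\<close> by simp
  have b: "(\<lambda>u v. E u v \<and> col u v) t s" using \<open>E t s\<close> \<open>col t s\<close> by simp
  show ?thesis by (rule converse_rtranclp_into_rtranclp[where r="\<lambda>u v. E u v \<and> col u v", OF a r_into_rtranclp[where r="\<lambda>u v. E u v \<and> col u v", OF b]])
qed

lemma rect_full:
  assumes sym: "\<forall>u v. col u v \<longrightarrow> col v u" and "S \<subseteq> X" "T \<subseteq> Y"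
    and rect: "\<forall>s\<in>S. \<forall>t\<in>T. E s t \<longrightarrow> col s t" and "N \<le> 2*card T"
    and "N \<le> 4*card S" "S \<noteq> {}"
  shows "\<exists>v\<in>S. (\<forall>s\<in>S. (\<lambda>u v. E u v \<and> col u v)\<^sup>*\<^sup>* v s) \<and> (\<forall>t\<in>T. (\<lambda>u v. E u v \<and> col u v)\<^sup>*\<^sup>* v t)"
proof -
  obtain s0 where s0: "s0 \<in> S" using assms by blast
  have A: "\<forall>s\<in>S. (\<lambda>u v. E u v \<and> col u v)\<^sup>*\<^sup>* s0 s" using rect_S[OF assms(1-5) s0] by blast
  have "\<forall>t\<in>T. (\<lambda>u v. E u v \<and> col u v)\<^sup>*\<^sup>* s0 t"
  proof
    fix t assume t: "t \<in> T"
    then obtain s where s: "s \<in> S" "E t s" using hasnbr[OF _ assms(2,6)] assms(3) by blast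
    have "E s t" using Esym s(2) .
    then have "col s t" using rect t s(1) by blast
    then have b: "(\<lambda>u v. E u v \<and> col u v) s t" using \<open>E s t\<close> by simp
    have "(\<lambda>u v. E u v \<and> col u v)\<^sup>*\<^sup>* s0 s" using A s(1) by blast
    then show "(\<lambda>u v. E u v \<and> col u v)\<^sup>*\<^sup>* s0 t" using b by (rule rtranclp.rtrancl_into_rtrancl)
  qed
  then show ?thesis using A s0 by blast
qed

lemma rect_L:
  assumes sym: "\<forall>u v. col u v \<longrightarrow> col v u" and "S \<subseteq> X" "T \<subseteq> Y"
    and rect: "\<forall>s\<in>S. \<forall>t\<in>T. E s t \<longrightarrow> col s t" and "N \<le> 2*card T"
    and "0 < k" "k \<le> card S" "k \<le> card T"
  shows "bigP X Y (\<lambda>u v. E u v \<and> col u v) (\<lambda>c. k \<le> c)"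
proof (cases "N \<le> 4*card S")
  case True
  have "S \<noteq> {}" using assms(6,7) by auto
  then obtain v where "v \<in> S" "\<forall>s\<in>S. (\<lambda>u v. E u v \<and> col u v)\<^sup>*\<^sup>* v s"
     "\<forall>t\<in>T. (\<lambda>u v. E u v \<and> col u v)\<^sup>*\<^sup>* v t"
    using rect_full[OF assms(1-5) True] by blast
  then show ?thesis
    by (intro big_intro[OF finX finY, of v S T]) (use assms(2,3,7,8) in auto)
next
  case False
  have "S \<noteq> {}" using assms(6,7) by auto
  then obtain s0 where s0: "s0 \<in> S" by blast
  have A: "\<forall>s\<in>S. (\<lambda>u v. E u v \<and> col u v)\<^sup>*\<^sup>* s0 s" using rect_S[OF assms(1-5) s0] by blast
  let ?B = "T \<inter> {u. E s0 u}"
  have B: "\<forall>t\<in>?B. (\<lambda>u v. E u v \<and> col u v)\<^sup>*\<^sup>* s0 t" using rect s0 by auto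
  have "4*card T < 4*card ?B + N" using miss assms s0 by blast
  then have "k \<le> card ?B" using False assms by linarith
  then show ?thesis
    by (intro big_intro[OF finX finY, of s0 S ?B]) (use assms(2,3,7) A B s0 in auto)
qed

lemma final_side:
  assumes sym: "\<forall>u v. col u v \<longrightarrow> col v u" and v: "v \<in> X \<union> Y"
    and h: "N \<le> 2*card ({u. (\<lambda>u v. E u v \<and> col u v)\<^sup>*\<^sup>* v u} \<inter> Y)"
    and l: "card ({u. (\<lambda>u v. E u v \<and> col u v)\<^sup>*\<^sup>* v u} \<inter> X) < m"
    and N: "N = m + n - 1" and n: "0 < n" and nm: "n < m"
  shows "bigP X Y (\<lambda>u v. E u v \<and> \<not> col u v) (\<lambda>c. n \<le> c)"
proof -
  let ?C = "{u. (\<lambda>u v. E u v \<and> col u v)\<^sup>*\<^sup>* v u}"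
  let ?P = "X - ?C"
  have e: "?P = X - ?C \<inter> X" by blast
  have fC: "finite (?C \<inter> X)" by (rule finite_subset[OF _ finX]) blast
  have "card (X - ?C \<inter> X) = card X - card (?C \<inter> X)"
    by (rule card_Diff_subset[OF fC]) blast
  then have "card ?P = N - card (?C \<inter> X)" using e cX by simp
  then have cP: "n \<le> card ?P" using l N by linarith
  have rect: "\<forall>s\<in>?P. \<forall>t\<in>?C \<inter> Y. E s t \<longrightarrow> \<not> col s t"
  proof (intro ballI impI notI)
    fix s t assume "s \<in> ?P" "t \<in> ?C \<inter> Y" "E s t" "col s t"
    then have "(\<lambda>u v. E u v \<and> col u v) t s" using Esym sym by blast
    moreover have "(\<lambda>u v. E u v \<and> col u v)\<^sup>*\<^sup>* v t" using \<open>t \<in> ?C \<inter> Y\<close> by simp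
    ultimately have "(\<lambda>u v. E u v \<and> col u v)\<^sup>*\<^sup>* v s" by (rule rtranclp.rtrancl_into_rtrancl[rotated])
    then have "s \<in> ?C" by simp
    then show False using \<open>s \<in> ?P\<close> by blast
  qed
  have s2: "\<forall>u v. \<not> col u v \<longrightarrow> \<not> col v u" using sym by blast
  have c2: "n \<le> card (?C \<inter> Y)" using h N nm by linarith
  show ?thesis
    by (rule rect_L[of "\<lambda>u v. \<not> col u v" ?P "?C \<inter> Y", OF s2 _ _ rect h n cP c2]) auto
qed

end


lemma card_out: "finite Z \<Longrightarrow> card (Z - A) = card Z - card (A \<inter> Z)"
proof -
  assume f: "finite Z"
  have e: "Z - A = Z - A \<inter> Z" by blast
  have fA: "finite (A \<inter> Z)" by (rule finite_subset[OF _ f]) blast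
  show ?thesis unfolding e by (rule card_Diff_subset[OF fA]) blast
qed

lemma closed':
  "(\<lambda>u v. E u v \<and> col u v)\<^sup>*\<^sup>* v s \<Longrightarrow> E s t \<Longrightarrow> col s t \<Longrightarrow> (\<lambda>u v. E u v \<and> col u v)\<^sup>*\<^sup>* v t"
proof -
  assume a: "(\<lambda>u v. E u v \<and> col u v)\<^sup>*\<^sup>* v s" and "E s t" "col s t"
  then have b: "(\<lambda>u v. E u v \<and> col u v) s t" by simp
  show ?thesis using a b by (rule rtranclp.rtrancl_into_rtrancl)
qed

context bg
begin

lemma closed:
  assumes sym: "\<forall>u v. col u v \<longrightarrow> col v u"
  shows "(\<lambda>u v. E u v \<and> col u v)\<^sup>*\<^sup>* v t \<Longrightarrow> E s t \<Longrightarrow> col s t \<Longrightarrow> (\<lambda>u v. E u v \<and> col u v)\<^sup>*\<^sup>* v s"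
proof -
  assume a: "(\<lambda>u v. E u v \<and> col u v)\<^sup>*\<^sup>* v t" and "E s t" "col s t"
  then have "E t s" "col t s" using Esym sym by blast+
  then show ?thesis using closed'[OF a] by blast
qed

lemma step2:
  assumes sym: "\<forall>u v. col u v \<longrightarrow> col v u" and x: "x \<in> X"
    and h: "N \<le> 2*card ({u. (\<lambda>u v. E u v \<and> col u v)\<^sup>*\<^sup>* x u} \<inter> Y)"
  shows "bigP X Y (\<lambda>u v. E u v \<and> col u v) (\<lambda>c. N \<le> 2*c)
       \<or> bigP X Y (\<lambda>u v. E u v \<and> \<not> col u v) (\<lambda>c. N \<le> 2*c)"
proof -
  let ?C = "{u. (\<lambda>u v. E u v \<and> col u v)\<^sup>*\<^sup>* x u}"
  show ?thesis
  proof (cases "N \<le> 2*card (?C \<inter> X)")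
    case True
    have "bigP X Y (\<lambda>u v. E u v \<and> col u v) (\<lambda>c. N \<le> 2*c)"
      by (rule big_intro[OF finX finY, of x "?C \<inter> X" "?C \<inter> Y"]) (use x h True in auto)
    then show ?thesis ..
  next
    case False
    let ?P = "X - ?C"
    have cP: "card ?P = N - card (?C \<inter> X)" using card_out[OF finX] cX by simp
    have s2: "\<forall>u v. \<not> col u v \<longrightarrow> \<not> col v u" using sym by blast
    have rect: "\<forall>s\<in>?P. \<forall>t\<in>?C \<inter> Y. E s t \<longrightarrow> \<not> col s t"
    proof (intro ballI impI notI)
      fix s t assume st: "s \<in> ?P" "t \<in> ?C \<inter> Y" "E s t" "col s t"
      have "(\<lambda>u v. E u v \<and> col u v)\<^sup>*\<^sup>* x t" using st(2) by simp
      then have "(\<lambda>u v. E u v \<and> col u v)\<^sup>*\<^sup>* x s" using closed[OF sym] st(3,4) by blast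
      then show False using st(1) by simp
    qed
    have c4: "N \<le> 4*card ?P" using cP False by linarith
    have "0 < card ?P" using cP False Npos by linarith
    then have ne: "?P \<noteq> {}" by (metis card.empty less_irrefl)
    obtain v where v: "v \<in> ?P" "\<forall>s\<in>?P. (\<lambda>u v. E u v \<and> \<not> col u v)\<^sup>*\<^sup>* v s"
       "\<forall>t\<in>?C \<inter> Y. (\<lambda>u v. E u v \<and> \<not> col u v)\<^sup>*\<^sup>* v t"
      using rect_full[where col="\<lambda>u v. \<not> col u v" and S="?P" and T="?C \<inter> Y", OF s2 _ _ rect h c4 ne] by blast
    have "bigP X Y (\<lambda>u v. E u v \<and> \<not> col u v) (\<lambda>c. N \<le> 2*c)"
      by (rule big_intro[OF finX finY, of v ?P "?C \<inter> Y"]) (use v h cP False in auto)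
    then show ?thesis ..
  qed
qed

lemma step3:
  assumes sym: "\<forall>u v. col u v \<longrightarrow> col v u" and x: "x \<in> X"
    and h: "2*card ({u. (\<lambda>u v. E u v \<and> col u v)\<^sup>*\<^sup>* x u} \<inter> Y) < N"
    and x': "x' \<in> X" and r: "(\<lambda>u v. E u v \<and> col u v)\<^sup>*\<^sup>* x x'"
  shows "(\<lambda>u v. E u v \<and> \<not> col u v)\<^sup>*\<^sup>* x x'"
proof -
  let ?C = "{u. (\<lambda>u v. E u v \<and> col u v)\<^sup>*\<^sup>* x u}"
  let ?Q = "Y - ?C"
  have cQ: "card ?Q = N - card (?C \<inter> Y)" using card_out[OF finY] cY by simp
  have "N \<le> 2*card ?Q" using cQ h by linarith
  then obtain t where t: "t \<in> ?Q" "E x t" "E x' t" using common[OF x x', of ?Q] by blast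
  have n1: "\<not> col x t"
  proof
    assume "col x t"
    then have "(\<lambda>u v. E u v \<and> col u v)\<^sup>*\<^sup>* x t" using closed'[where E=E and col=col, OF rtranclp.rtrancl_refl t(2)] by blast
    then show False using t(1) by blast
  qed
  have n2: "\<not> col t x'"
  proof
    assume "col t x'"
    then have "col x' t" using sym by blast
    then have "(\<lambda>u v. E u v \<and> col u v)\<^sup>*\<^sup>* x t" using closed'[OF r t(3)] by blast
    then show False using t(1) by blast
  qed
  have a: "(\<lambda>u v. E u v \<and> \<not> col u v) x t" using n1 t(2) by simp
  have b: "(\<lambda>u v. E u v \<and> \<not> col u v) t x'" using n2 t(3) Esym by simp
  show ?thesis by (rule converse_rtranclp_into_rtranclp[where r="\<lambda>u v. E u v \<and> \<not> col u v", OF a r_into_rtranclp[where r="\<lambda>u v. E u v \<and> \<not> col u v", OF b]])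
qed

end



context bg
begin

lemma claimM:
  assumes sym: "\<forall>u v. col u v \<longrightarrow> col v u"
  shows "bigP X Y (\<lambda>u v. E u v \<and> col u v) (\<lambda>c. N \<le> 2*c)
       \<or> bigP X Y (\<lambda>u v. E u v \<and> \<not> col u v) (\<lambda>c. N \<le> 2*c)"
proof -
  have sn: "\<forall>u v. \<not> col u v \<longrightarrow> \<not> col v u" using sym by blast
  have "X \<noteq> {}" using cX Npos by auto
  then obtain x where x: "x \<in> X" by blast
  let ?Fc = "\<lambda>u v. E u v \<and> col u v"
  let ?Fn = "\<lambda>u v. E u v \<and> \<not> col u v"
  let ?C = "{u. ?Fc\<^sup>*\<^sup>* x u}"
  let ?D = "{u. ?Fn\<^sup>*\<^sup>* x u}"
  show ?thesis
  proof (cases "N \<le> 2*card (?C \<inter> Y)")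
    case True
    then show ?thesis using step2[OF sym x] by blast
  next
    case h1: False
    show ?thesis
    proof (cases "N \<le> 2*card (?D \<inter> Y)")
      case True
      have "bigP X Y ?Fn (\<lambda>c. N \<le> 2*c) \<or> bigP X Y (\<lambda>u v. E u v \<and> \<not> \<not> col u v) (\<lambda>c. N \<le> 2*c)"
        using step2[where col="\<lambda>u v. \<not> col u v", OF sn x True] by blast
      then show ?thesis by (simp only: not_not) blast
    next
      case h2: False
      have h1': "2*card (?C \<inter> Y) < N" using h1 by linarith
      have h2': "2*card (?D \<inter> Y) < N" using h2 by linarith
      have AeqCD: "\<forall>a\<in>X. (a \<in> ?C) = (a \<in> ?D)"
      proof
        fix a assume a: "a \<in> X"
        have i1: "?Fc\<^sup>*\<^sup>* x a \<Longrightarrow> ?Fn\<^sup>*\<^sup>* x a" using step3[OF sym x h1' a] by blast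
        have "?Fn\<^sup>*\<^sup>* x a \<Longrightarrow> (\<lambda>u v. E u v \<and> \<not> \<not> col u v)\<^sup>*\<^sup>* x a"
          using step3[where col="\<lambda>u v. \<not> col u v", OF sn x h2' a] by blast
        then have i2: "?Fn\<^sup>*\<^sup>* x a \<Longrightarrow> ?Fc\<^sup>*\<^sup>* x a" by simp
        show "(a \<in> ?C) = (a \<in> ?D)" using i1 i2 by blast
      qed
      have fC: "finite (?C \<inter> Y)" "finite (?D \<inter> Y)" using finY by auto
      have Nx: "{u. E x u} \<subseteq> (?C \<inter> Y) \<union> (?D \<inter> Y)"
      proof
        fix u assume "u \<in> {u. E x u}"
        then have u: "E x u" "u \<in> Y" using nbrY[OF x] by auto
        show "u \<in> (?C \<inter> Y) \<union> (?D \<inter> Y)"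
        proof (cases "col x u")
          case True
          then have "?Fc\<^sup>*\<^sup>* x u" using closed'[where E=E and col=col, OF rtranclp.rtrancl_refl u(1)] by blast
          then show ?thesis using u by blast
        next
          case False
          then have "?Fn\<^sup>*\<^sup>* x u" using closed'[where E=E and col="\<lambda>u v. \<not> col u v", OF rtranclp.rtrancl_refl u(1)] by blast
          then show ?thesis using u by blast
        qed
      qed
      have "card {u. E x u} \<le> card ((?C \<inter> Y) \<union> (?D \<inter> Y))"
        by (rule card_mono[OF _ Nx]) (use fC in auto)
      also have "\<dots> \<le> card (?C \<inter> Y) + card (?D \<inter> Y)" by (rule card_Un_le)
      finally have sumCD: "card {u. E x u} \<le> card (?C \<inter> Y) + card (?D \<inter> Y)" .
      have dx: "3*N < 4*card {u. E x u}" using degX[OF x] .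
      have c4C: "N \<le> 4*card (?C \<inter> Y)" using sumCD dx h2' by linarith
      have c4D: "N \<le> 4*card (?D \<inter> Y)" using sumCD dx h1' by linarith
      have "\<not> Y \<subseteq> (?C \<inter> Y) \<union> (?D \<inter> Y)"
      proof
        assume "Y \<subseteq> (?C \<inter> Y) \<union> (?D \<inter> Y)"
        then have "card Y \<le> card ((?C \<inter> Y) \<union> (?D \<inter> Y))" by (rule card_mono[rotated]) (use fC in auto)
        also have "\<dots> \<le> card (?C \<inter> Y) + card (?D \<inter> Y)" by (rule card_Un_le)
        finally show False using cY h1' h2' by linarith
      qed
      then obtain y0 where y0: "y0 \<in> Y" "y0 \<notin> ?C" "y0 \<notin> ?D" by blast
      let ?P = "X - ?C"
      have key: "\<And>y. y \<in> Y \<Longrightarrow> y \<notin> ?C \<Longrightarrow> y \<notin> ?D \<Longrightarrow> {u. E y u} \<subseteq> ?P"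
      proof
        fix y u assume y: "y \<in> Y" "y \<notin> ?C" "y \<notin> ?D" and "u \<in> {u. E y u}"
        then have e: "E y u" by simp
        then have uX: "u \<in> X" using Eside disj y(1) by blast
        have e': "E u y" using Esym e .
        have "u \<notin> ?C"
        proof
          assume uC: "u \<in> ?C"
          show False
          proof (cases "col u y")
            case True
            then have "?Fc\<^sup>*\<^sup>* x y" using closed'[where E=E and col=col, OF _ e'] uC by blast
            then show False using y by blast
          next
            case False
            have "?Fn\<^sup>*\<^sup>* x u" using AeqCD uX uC by blast
            then have "?Fn\<^sup>*\<^sup>* x y" using closed'[where E=E and col="\<lambda>u v. \<not> col u v", OF _ e'] False by blast
            then show False using y by blast
          qed
        qed
        then show "u \<in> ?P" using uX by blast
      qed
      have fP: "finite ?P" using finX by auto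
      have "card {u. E y0 u} \<le> card ?P" by (rule card_mono[OF fP key[OF y0]])
      then have cP: "3*N < 4*card ?P" using degY[OF y0(1)] by linarith
      have rectB: "\<forall>s\<in>?C \<inter> Y. \<forall>t\<in>?P. E s t \<longrightarrow> \<not> col s t"
      proof (intro ballI impI notI)
        fix s t assume st: "s \<in> ?C \<inter> Y" "t \<in> ?P" "E s t" "col s t"
        have "?Fc\<^sup>*\<^sup>* x s" using st(1) by simp
        then have "?Fc\<^sup>*\<^sup>* x t" using closed'[where E=E and col=col] st(3,4) by blast
        then show False using st(2) by simp
      qed
      have rectR: "\<forall>s\<in>?D \<inter> Y. \<forall>t\<in>?P. E s t \<longrightarrow> col s t"
      proof (intro ballI impI)
        fix s t assume st: "s \<in> ?D \<inter> Y" "t \<in> ?P" "E s t"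
        show "col s t"
        proof (rule ccontr)
          assume nc: "\<not> col s t"
          have "?Fn\<^sup>*\<^sup>* x s" using st(1) by simp
          then have "?Fn\<^sup>*\<^sup>* x t" using closed'[where E=E and col="\<lambda>u v. \<not> col u v"] st(3) nc by blast
          then have "t \<in> ?C" using AeqCD st(2) by blast
          then show False using st(2) by blast
        qed
      qed
      have bgs: "bg Y X E N" by (rule bg_swap[OF bg_axioms])
      have neC: "?C \<inter> Y \<noteq> {}" using c4C Npos by (metis card.empty mult_0_right not_le)
      have neD: "?D \<inter> Y \<noteq> {}" using c4D Npos by (metis card.empty mult_0_right not_le)
      have P2: "N \<le> 2*card ?P" using cP by linarith
      obtain v where v: "v \<in> ?C \<inter> Y" "\<forall>s\<in>?C \<inter> Y. ?Fn\<^sup>*\<^sup>* v s" "\<forall>t\<in>?P. ?Fn\<^sup>*\<^sup>* v t"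
        using bg.rect_full[OF bgs, where col="\<lambda>u v. \<not> col u v" and S="?C \<inter> Y" and T="?P",
            OF sn _ _ rectB P2 c4C neC] by blast
      obtain v' where v': "v' \<in> ?D \<inter> Y" "\<forall>s\<in>?D \<inter> Y. ?Fc\<^sup>*\<^sup>* v' s" "\<forall>t\<in>?P. ?Fc\<^sup>*\<^sup>* v' t"
        using bg.rect_full[OF bgs, where col=col and S="?D \<inter> Y" and T="?P",
            OF sym _ _ rectR P2 c4D neD] by blast
      let ?K = "{u. ?Fn\<^sup>*\<^sup>* v u} \<inter> Y"
      let ?L = "{u. ?Fc\<^sup>*\<^sup>* v' u} \<inter> Y"
      have cover: "Y \<subseteq> ?K \<union> ?L"
      proof
        fix y assume yY: "y \<in> Y"
        show "y \<in> ?K \<union> ?L"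
        proof (cases "y \<in> ?C \<or> y \<in> ?D")
          case True
          then show ?thesis using v(2) v'(2) yY by blast
        next
          case False
          then have sub: "{u. E y u} \<subseteq> ?P" using key yY by blast
          have "0 < card {u. E y u}" using degY[OF yY] by linarith
          then obtain p where p: "E y p" by (metis Collect_empty_eq card.empty less_irrefl)
          then have pP: "p \<in> ?P" using sub by blast
          have e': "E p y" using Esym p .
          show ?thesis
          proof (cases "col p y")
            case True
            have "?Fc\<^sup>*\<^sup>* v' p" using v'(3) pP by blast
            then have "?Fc\<^sup>*\<^sup>* v' y" using closed'[where E=E and col=col, OF _ e'] True by blast
            then show ?thesis using yY by blast
          next
            case False
            have "?Fn\<^sup>*\<^sup>* v p" using v(3) pP by blast
            then have "?Fn\<^sup>*\<^sup>* v y" using closed'[where E=E and col="\<lambda>u v. \<not> col u v", OF _ e'] False by blast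
            then show ?thesis using yY by blast
          qed
        qed
      qed
      have fKL: "finite ?K" "finite ?L" using finY by auto
      have "card Y \<le> card (?K \<union> ?L)" by (rule card_mono[OF _ cover]) (use fKL in auto)
      also have "\<dots> \<le> card ?K + card ?L" by (rule card_Un_le)
      finally have KL: "N \<le> card ?K + card ?L" using cY by simp
      show ?thesis
      proof (cases "N \<le> 2*card ?K")
        case True
        have "bigP X Y ?Fn (\<lambda>c. N \<le> 2*c)"
          by (rule big_intro[OF finX finY, of v ?P ?K]) (use v True P2 in auto)
        then show ?thesis ..
      next
        case False
        then have "N \<le> 2*card ?L" using KL by linarith
        then have "bigP X Y ?Fc (\<lambda>c. N \<le> 2*c)"
          by (intro big_intro[OF finX finY, of v' ?P ?L]) (use v' P2 in auto)
        then show ?thesis ..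
      qed
    qed
  qed
qed

end

theorem lemma2p1:
  fixes m n :: nat and V1 V2 :: "'a set" and E :: "'a \<Rightarrow> 'a \<Rightarrow> bool"
    and red :: "'a \<Rightarrow> 'a \<Rightarrow> bool"
  assumes "0 < n" and "n < m"
    and "bipartite_graph V1 V2 E"
    and "card V1 = m + n - 1" and "card V2 = m + n - 1"
    and "\<forall>v \<in> V1 \<union> V2. 4 * degree E v > 3 * (m + n - 1)"
    and "\<forall>u v. red u v \<longrightarrow> red v u"
  shows "(\<exists>C \<in> components (V1 \<union> V2) (\<lambda>u v. E u v \<and> red u v).
            card (C \<inter> V1) \<ge> m \<and> card (C \<inter> V2) \<ge> m)
       \<or> (\<exists>C \<in> components (V1 \<union> V2) (\<lambda>u v. E u v \<and> \<not> red u v).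
            card (C \<inter> V1) \<ge> n \<and> card (C \<inter> V2) \<ge> n)"
proof -
  define N where "N = m + n - 1"
  have bgI: "bg V1 V2 E N"
  proof
    show "finite V1" "finite V2" "V1 \<inter> V2 = {}" using assms(3) unfolding bipartite_graph_def by blast+
    show "card V1 = N" "card V2 = N" using assms(4,5) N_def by simp_all
    show "\<And>u v. E u v \<Longrightarrow> E v u" using assms(3) unfolding bipartite_graph_def by blast
    show "\<And>u v. E u v \<Longrightarrow> u \<in> V1 \<and> v \<in> V2 \<or> u \<in> V2 \<and> v \<in> V1"
      using assms(3) unfolding bipartite_graph_def by blast
    show "\<And>v. v \<in> V1 \<Longrightarrow> 3 * N < 4 * card {u. E v u}"
      using assms(6) unfolding degree_def N_def by auto
    show "\<And>v. v \<in> V2 \<Longrightarrow> 3 * N < 4 * card {u. E v u}"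
      using assms(6) unfolding degree_def N_def by auto
    show "0 < N" using assms(1,2) N_def by simp
  qed
  interpret bg V1 V2 E N by (rule bgI)
  have sym: "\<forall>u v. red u v \<longrightarrow> red v u" by fact
  have nN: "2*n \<le> N" using assms(1,2) N_def by simp
  have NN: "N = m + n - 1" by (rule N_def)
  let ?Fr = "\<lambda>u v. E u v \<and> red u v"
  let ?Fb = "\<lambda>u v. E u v \<and> \<not> red u v"
  have goal: "bigP V1 V2 ?Fr (\<lambda>c. m \<le> c) \<or> bigP V1 V2 ?Fb (\<lambda>c. n \<le> c)"
  proof -
    from claimM[OF sym] show ?thesis
    proof
      assume "bigP V1 V2 ?Fb (\<lambda>c. N \<le> 2*c)"
      then have "bigP V1 V2 ?Fb (\<lambda>c. n \<le> c)" by (rule bigP_mono) (use nN in linarith)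
      then show ?thesis ..
    next
      assume "bigP V1 V2 ?Fr (\<lambda>c. N \<le> 2*c)"
      then obtain C where C: "C \<in> components (V1 \<union> V2) ?Fr" "N \<le> 2*card (C \<inter> V1)" "N \<le> 2*card (C \<inter> V2)"
        unfolding bigP_def by blast
      then obtain v where v: "v \<in> V1 \<union> V2" "C = component (V1 \<union> V2) ?Fr v"
        unfolding components_def by blast
      have c1: "C \<inter> V1 = {u. ?Fr\<^sup>*\<^sup>* v u} \<inter> V1" and c2: "C \<inter> V2 = {u. ?Fr\<^sup>*\<^sup>* v u} \<inter> V2"
        unfolding v(2) by (rule comp_int(1), rule comp_int(2))
      show ?thesis
      proof (cases "m \<le> card (C \<inter> V1) \<and> m \<le> card (C \<inter> V2)")
        case True
        then have "bigP V1 V2 ?Fr (\<lambda>c. m \<le> c)" unfolding bigP_def using C(1) by blast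
        then show ?thesis ..
      next
        case False
        show ?thesis
        proof (cases "card (C \<inter> V1) < m")
          case True
          have h: "N \<le> 2*card ({u. ?Fr\<^sup>*\<^sup>* v u} \<inter> V2)" using C(3) unfolding c2 .
          have l: "card ({u. ?Fr\<^sup>*\<^sup>* v u} \<inter> V1) < m" using True unfolding c1 .
          have "bigP V1 V2 ?Fb (\<lambda>c. n \<le> c)"
            by (rule final_side[OF sym v(1) h l NN assms(1,2)])
          then show ?thesis ..
        next
          case F2: False
          then have l2: "card (C \<inter> V2) < m" using False by auto
          have v': "v \<in> V2 \<union> V1" using v(1) by blast
          have h: "N \<le> 2*card ({u. ?Fr\<^sup>*\<^sup>* v u} \<inter> V1)" using C(2) unfolding c1 .
          have l: "card ({u. ?Fr\<^sup>*\<^sup>* v u} \<inter> V2) < m" using l2 unfolding c2 .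
          have "bigP V2 V1 ?Fb (\<lambda>c. n \<le> c)"
            by (rule bg.final_side[OF bg_swap[OF bgI] sym v' h l NN assms(1,2)])
          then have "bigP V1 V2 ?Fb (\<lambda>c. n \<le> c)" by (simp add: bigP_swap)
          then show ?thesis ..
        qed
      qed
    qed
  qed
  then show ?thesis unfolding bigP_def by simp
qed

end
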